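(* Let $\mathcal{F}=\mathcal{B}(K_3)$. For every odd integer $n\ge 3$ with $n\ne 5$, $f(n,\mathcal{F})=2^{n-2}$.
   Context: For a graph $G$, a hypergraph $H$ is a Berge-$G$ hypergraph if there are an injective map $\phi:V(G)\to V(H)$ and pairwise distinct hyperedges $e_{xy}\in E(H)$, one for each $xy\in E(G)$, with $\phi(x),\phi(y)\in e_{xy}$. $\mathcal{B}(G)$ denotes the family of all Berge-$G$ hypergraphs. For a positive integer $n$ and a graph $G$, $f(n,\mathcal{B}(G))$ is the smallest number of colors in a coloring of all subsets of $[n]=\{1,\dots,n\}$ (i.e. of $2^{[n]}$) such that there is no monochromatic Berge-$G$ hypergraph, i.e. no color class, viewed as a (non-uniform) hypergraph on $[n]$, contains a Berge-$G$ subhypergraph. *)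

theory Defs
  imports Main
begin

text \<open>A graph G is given by a vertex set V and an edge set E (each edge a 2-element subset of V).\<close>

definition berge_copy :: "'v set \<Rightarrow> 'v set set \<Rightarrow> 'u set \<Rightarrow> 'u set set \<Rightarrow> bool" where
  "berge_copy V E U H \<longleftrightarrow>
     (\<exists>\<phi> \<epsilon>. inj_on \<phi> V \<and> \<phi> ` V \<subseteq> U \<and> inj_on \<epsilon> E \<and> \<epsilon> ` E \<subseteq> H \<and>
            (\<forall>xy\<in>E. \<phi> ` xy \<subseteq> \<epsilon> xy))"

definition f_berge :: "nat \<Rightarrow> 'v set \<Rightarrow> 'v set set \<Rightarrow> nat" where
  "f_berge n V E = (LEAST k. \<exists>c :: nat set \<Rightarrow> nat.
      (\<forall>A\<in>Pow {1..n}. c A < k) \<and>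
      (\<forall>i<k. \<not> berge_copy V E {1..n} {A \<in> Pow {1..n}. c A = i}))"

definition K3_V :: "nat set" where "K3_V = {0, 1, 2}"
definition K3_E :: "nat set set" where "K3_E = {{0, 1}, {1, 2}, {0, 2}}"

end

theory Submission
  imports Defs
begin

definition tri :: "nat set \<Rightarrow> nat set \<Rightarrow> nat set \<Rightarrow> bool" where
  "tri A B C \<longleftrightarrow> (\<exists>x y z. x \<noteq> y \<and> y \<noteq> z \<and> x \<noteq> z \<and> x \<in> A \<and> y \<in> A \<and> y \<in> B \<and> z \<in> B \<and> x \<in> C \<and> z \<in> C)"

lemma three_elems:
  assumes "3 \<le> card S"
  obtains x y z where "x \<in> S" "y \<in> S" "z \<in> S" "x \<noteq> y" "y \<noteq> z" "x \<noteq> z"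
proof -
  obtain T where T: "T \<subseteq> S" "card T = 3" "finite T" by (rule obtain_subset_with_card_n[OF assms])
  from T(2)[unfolded card_3_iff] obtain x y z where xyz: "T = {x,y,z}" "x \<noteq> y" "y \<noteq> z" "x \<noteq> z"
    by blast
  have "x \<in> S" "y \<in> S" "z \<in> S" using T(1) xyz(1) by auto
  then show ?thesis using xyz(2-4) by (rule that)
qed

lemma two_sdr:
  assumes "finite (P \<union> Q)" "P \<noteq> {}" "Q \<noteq> {}" "2 \<le> card (P \<union> Q)"
  shows "\<exists>x\<in>P. \<exists>z\<in>Q. x \<noteq> z"
proof (rule ccontr)
  assume h: "\<not> ?thesis"
  obtain p where p: "p \<in> P" using assms by auto
  obtain q where q: "q \<in> Q" using assms by auto
  have a: "\<forall>x\<in>P. x = q" using h q by auto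
  have b: "\<forall>z\<in>Q. z = p" using h p by auto
  have pq: "p = q" using h p q by auto
  have "P \<union> Q \<subseteq> {p}" using a b pq by auto
  then have "card (P \<union> Q) \<le> 1" using card_mono[of "{p}" "P \<union> Q"] by simp
  then show False using assms(4) by simp
qed

lemma tri_rot:
  assumes "tri B C A" shows "tri A B C"
proof -
  obtain x y z where h: "x \<noteq> y" "y \<noteq> z" "x \<noteq> z" "x \<in> B" "y \<in> B" "y \<in> C" "z \<in> C" "x \<in> A" "z \<in> A"
    using assms unfolding tri_def by blast
  show ?thesis unfolding tri_def
    apply (rule exI[where x = z], rule exI[where x = x], rule exI[where x = y])
    using h by simp
qed

lemma tri_intro:
  assumes "x \<noteq> y" "y \<noteq> z" "x \<noteq> z" "x \<in> A" "y \<in> A" "y \<in> B" "z \<in> B" "x \<in> C" "z \<in> C"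
  shows "tri A B C"
  unfolding tri_def
  apply (rule exI[where x = x], rule exI[where x = y], rule exI[where x = z])
  using assms by simp

lemma tri_case1:
  fixes A B C U :: "nat set" and n :: nat
  assumes U: "finite U" "card U = n" and sub: "A \<subseteq> U" "B \<subseteq> U" "C \<subseteq> U"
    and big: "n + 1 \<le> 2 * card A" "n + 1 \<le> 2 * card B" "n + 1 \<le> 2 * card C"
    and AB: "A \<noteq> B" and y: "y \<in> A" "y \<in> B" "y \<notin> C"
  shows "tri A B C"
proof -
  have fA: "finite A" "finite B" "finite C" using sub U finite_subset by auto
  have uAB: "n + 3 \<le> 2 * card (A \<union> B)"
  proof (cases "A \<union> B = A")
    case True
    then have "B \<subset> A \<union> B" using AB by blast
    then have "card B < card (A \<union> B)" using psubset_card_mono[OF finite_UnI[OF fA(1) fA(2)]] by blast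
    then show ?thesis using big by linarith
  next
    case False
    then have "A \<subset> A \<union> B" by blast
    then have "card A < card (A \<union> B)" using psubset_card_mono[OF finite_UnI[OF fA(1) fA(2)]] by blast
    then show ?thesis using big by linarith
  qed
  have "A \<union> B \<union> C \<subseteq> U" using sub by blast
  then have c1: "card (A \<union> B \<union> C) \<le> n" using card_mono[OF U(1)] U(2) by simp
  have c2: "card (A \<union> B) + card C = card (A \<union> B \<union> C) + card ((A \<union> B) \<inter> C)"
    using fA card_Un_Int[of "A \<union> B" C] by simp
  have two: "2 \<le> card ((A \<union> B) \<inter> C)" using c1 c2 uAB big by linarith
  have e: "(A \<union> B) \<inter> C = (A \<inter> C) \<union> (B \<inter> C)" by blast
  have "A \<union> C \<subseteq> U" using sub by blast
  then have c3: "card (A \<union> C) \<le> n" using card_mono[OF U(1)] U(2) by simp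
  have "card A + card C = card (A \<union> C) + card (A \<inter> C)" using fA card_Un_Int[of A C] by simp
  then have "1 \<le> card (A \<inter> C)" using c3 big by linarith
  then have ne1: "A \<inter> C \<noteq> {}" by auto
  have "B \<union> C \<subseteq> U" using sub by blast
  then have c4: "card (B \<union> C) \<le> n" using card_mono[OF U(1)] U(2) by simp
  have "card B + card C = card (B \<union> C) + card (B \<inter> C)" using fA card_Un_Int[of B C] by simp
  then have "1 \<le> card (B \<inter> C)" using c4 big by linarith
  then have ne2: "B \<inter> C \<noteq> {}" by auto
  have fin: "finite (A \<inter> C \<union> B \<inter> C)" using fA by auto
  have two': "2 \<le> card (A \<inter> C \<union> B \<inter> C)" using two e by simp
  obtain x z where "x \<in> A \<inter> C" "z \<in> B \<inter> C" "x \<noteq> z"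
    using two_sdr[OF fin ne1 ne2 two'] by blast
  then show ?thesis using y by (intro tri_intro[of x y z]) auto
qed

lemma tri_main:
  fixes A B C U :: "nat set" and n :: nat
  assumes U: "finite U" "card U = n" and sub: "A \<subseteq> U" "B \<subseteq> U" "C \<subseteq> U"
    and big: "n + 1 \<le> 2 * card A" "n + 1 \<le> 2 * card B" "n + 1 \<le> 2 * card C"
    and d: "A \<noteq> B" "B \<noteq> C" "A \<noteq> C" and nn: "n = 3 \<or> 7 \<le> n"
  shows "tri A B C"
proof -
  have fA: "finite A" "finite B" "finite C" using sub U finite_subset by auto
  show ?thesis
  proof (cases "\<exists>y. y \<in> A \<and> y \<in> B \<and> y \<notin> C")
    case True
    then obtain y where "y \<in> A" "y \<in> B" "y \<notin> C" by blast
    then show ?thesis by (rule tri_case1[OF U sub big d(1)])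
  next
    case F1: False
    show ?thesis
    proof (cases "\<exists>y. y \<in> B \<and> y \<in> C \<and> y \<notin> A")
      case True
      then obtain y where "y \<in> B" "y \<in> C" "y \<notin> A" by blast
      then have "tri B C A" by (rule tri_case1[OF U sub(2,3,1) big(2,3,1) d(2)])
      then show ?thesis by (rule tri_rot)
    next
      case F2: False
      show ?thesis
      proof (cases "\<exists>y. y \<in> C \<and> y \<in> A \<and> y \<notin> B")
        case True
        then obtain y where "y \<in> C" "y \<in> A" "y \<notin> B" by blast
        moreover have "C \<noteq> A" using d(3) by blast
        ultimately have "tri C A B" using tri_case1[OF U sub(3,1,2) big(3,1,2)] by simp
        then have "tri B C A" by (rule tri_rot)
        then show ?thesis by (rule tri_rot)
      next
        case F3: False
        define I where "I = A \<inter> B \<inter> C"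
        have eAB: "A \<inter> B = I" using F1 I_def by blast
        have eC: "(A \<union> B) \<inter> C = I" using F2 F3 I_def by blast
        have s1: "card (A \<union> B) + card I = card A + card B"
          using fA card_Un_Int[of A B] eAB by simp
        have s2: "card (A \<union> B \<union> C) + card I = card (A \<union> B) + card C"
          using fA card_Un_Int[of "A \<union> B" C] eC by simp
        have "A \<union> B \<union> C \<subseteq> U" using sub by blast
        then have c1: "card (A \<union> B \<union> C) \<le> n" using card_mono[OF U(1)] U(2) by simp
        have IA: "I \<subseteq> A" "I \<subseteq> B" "I \<subseteq> C" using I_def by auto
        have le: "card I \<le> card A" "card I \<le> card B" "card I \<le> card C"
          using card_mono[OF fA(1) IA(1)] card_mono[OF fA(2) IA(2)] card_mono[OF fA(3) IA(3)] by auto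
        have lt1: "A \<noteq> I \<Longrightarrow> card I < card A" using psubset_card_mono[OF fA(1)] IA(1) by blast
        have lt2: "B \<noteq> I \<Longrightarrow> card I < card B" using psubset_card_mono[OF fA(2)] IA(2) by blast
        have lt3: "C \<noteq> I \<Longrightarrow> card I < card C" using psubset_card_mono[OF fA(3)] IA(3) by blast
        note lt = lt1 lt2 lt3
        have "(B \<noteq> I \<and> C \<noteq> I) \<or> (A \<noteq> I \<and> C \<noteq> I) \<or> (A \<noteq> I \<and> B \<noteq> I)"
          using d by blast
        then have sum: "3 * card I + 2 \<le> card A + card B + card C"
        proof (elim disjE)
          assume "B \<noteq> I \<and> C \<noteq> I"
          then have "card I < card B" "card I < card C" using lt2 lt3 by auto
          then show ?thesis using le by linarith
        next
          assume "A \<noteq> I \<and> C \<noteq> I"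
          then have "card I < card A" "card I < card C" using lt1 lt3 by auto
          then show ?thesis using le by linarith
        next
          assume "A \<noteq> I \<and> B \<noteq> I"
          then have "card I < card A" "card I < card B" using lt1 lt2 by auto
          then show ?thesis using le by linarith
        qed
        have "3 \<le> card I" using nn
        proof
          assume "n = 3" then show ?thesis using sum s1 s2 c1 big by linarith
        next
          assume "7 \<le> n" then show ?thesis using sum s1 s2 c1 big by linarith
        qed
        then obtain x y z where "x \<in> I" "y \<in> I" "z \<in> I" "x \<noteq> y" "y \<noteq> z" "x \<noteq> z"
          by (rule three_elems)
        then show ?thesis using IA by (intro tri_intro[of x y z]) auto
      qed
    qed
  qed
qed

lemma tri_berge:
  assumes "tri A B C" "A \<noteq> B" "B \<noteq> C" "A \<noteq> C" "A \<in> H" "B \<in> H" "C \<in> H" "A \<subseteq> U" "B \<subseteq> U"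
  shows "berge_copy K3_V K3_E U H"
proof -
  obtain x y z where xyz: "x \<noteq> y" "y \<noteq> z" "x \<noteq> z" "x \<in> A" "y \<in> A" "y \<in> B" "z \<in> B" "x \<in> C" "z \<in> C"
    using assms(1) unfolding tri_def by blast
  define \<phi> where "\<phi> = (\<lambda>v::nat. if v = 0 then x else if v = 1 then y else z)"
  define \<epsilon> where "\<epsilon> = (\<lambda>e::nat set. if e = {0,1} then A else if e = {1,2} then B else C)"
  have i1: "inj_on \<phi> K3_V" unfolding inj_on_def K3_V_def \<phi>_def using xyz by auto
  have i2: "\<phi> ` K3_V \<subseteq> U" unfolding K3_V_def \<phi>_def using xyz assms by auto
  have i3: "inj_on \<epsilon> K3_E" unfolding inj_on_def K3_E_def \<epsilon>_def using assms(2-4)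
    by (auto simp: doubleton_eq_iff)
  have i4: "\<epsilon> ` K3_E \<subseteq> H" unfolding K3_E_def \<epsilon>_def using assms by (auto simp: doubleton_eq_iff)
  have i5: "\<forall>xy\<in>K3_E. \<phi> ` xy \<subseteq> \<epsilon> xy" unfolding K3_E_def \<epsilon>_def \<phi>_def using xyz
    by (auto simp: doubleton_eq_iff)
  show ?thesis unfolding berge_copy_def using i1 i2 i3 i4 i5 by blast
qed

lemma berge_three:
  assumes "berge_copy K3_V K3_E U H"
  obtains A B C where "A \<in> H" "B \<in> H" "C \<in> H" "A \<noteq> B" "B \<noteq> C" "A \<noteq> C"
    "A \<inter> B \<noteq> {}" "B \<inter> C \<noteq> {}" "A \<inter> C \<noteq> {}"
proof -
  from assms obtain \<phi> \<epsilon> where h: "inj_on \<epsilon> K3_E" "\<epsilon> ` K3_E \<subseteq> H" "\<forall>xy\<in>K3_E. \<phi> ` xy \<subseteq> \<epsilon> xy"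
    unfolding berge_copy_def by (elim exE conjE) (rule that)
  have m: "{0,1} \<in> K3_E" "{1,2} \<in> K3_E" "{0,2} \<in> K3_E" unfolding K3_E_def by auto
  have ne: "{0::nat,1} \<noteq> {1,2}" "{1::nat,2} \<noteq> {0,2}" "{0::nat,1} \<noteq> {0,2}"
    by (auto simp: doubleton_eq_iff)
  have d1: "\<epsilon> {0,1} \<noteq> \<epsilon> {1,2}" by (rule inj_on_contraD[OF h(1) ne(1) m(1) m(2)])
  have d2: "\<epsilon> {1,2} \<noteq> \<epsilon> {0,2}" by (rule inj_on_contraD[OF h(1) ne(2) m(2) m(3)])
  have d3: "\<epsilon> {0,1} \<noteq> \<epsilon> {0,2}" by (rule inj_on_contraD[OF h(1) ne(3) m(1) m(3)])
  have i1: "\<epsilon> {0,1} \<in> H" using h(2) m(1) by (rule subsetD[OF _ imageI])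
  have i2: "\<epsilon> {1,2} \<in> H" using h(2) m(2) by (rule subsetD[OF _ imageI])
  have i3: "\<epsilon> {0,2} \<in> H" using h(2) m(3) by (rule subsetD[OF _ imageI])
  have s1: "\<phi> ` {0,1} \<subseteq> \<epsilon> {0,1}" using h(3) m(1) by (rule bspec)
  have s2: "\<phi> ` {1,2} \<subseteq> \<epsilon> {1,2}" using h(3) m(2) by (rule bspec)
  have s3: "\<phi> ` {0,2} \<subseteq> \<epsilon> {0,2}" using h(3) m(3) by (rule bspec)
  have p1: "\<phi> 1 \<in> \<epsilon> {0,1} \<inter> \<epsilon> {1,2}" using s1 s2 by auto
  have p2: "\<phi> 2 \<in> \<epsilon> {1,2} \<inter> \<epsilon> {0,2}" using s2 s3 by auto
  have p3: "\<phi> 0 \<in> \<epsilon> {0,1} \<inter> \<epsilon> {0,2}" using s1 s3 by auto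
  have q1: "\<epsilon> {0,1} \<inter> \<epsilon> {1,2} \<noteq> {}" using p1 by blast
  have q2: "\<epsilon> {1,2} \<inter> \<epsilon> {0,2} \<noteq> {}" using p2 by blast
  have q3: "\<epsilon> {0,1} \<inter> \<epsilon> {0,2} \<noteq> {}" using p3 by blast
  show ?thesis by (rule that[OF i1 i2 i3 d1 d2 d3 q1 q2 q3])
qed

lemma pigeon4:
  assumes "R a a'" "R a' a" "R b b'" "R b' b"
    "X \<in> {a, b, a', b'}" "Y \<in> {a, b, a', b'}" "Z \<in> {a, b, a', b'}"
    "X \<noteq> Y" "Y \<noteq> Z" "X \<noteq> Z" "\<not> R X Y" "\<not> R Y Z" "\<not> R X Z" "\<not> R Y X" "\<not> R Z Y" "\<not> R Z X"
  shows False
  using assms(5-7) apply (elim insertE emptyE)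
  using assms by simp_all


lemma member4:
  fixes X U S :: "nat set" and n :: nat
  assumes "X \<subseteq> U" "n \<in> U" "(if n \<in> X then U - X else X) - {n - 1, n} = S"
  shows "X \<in> {S, insert (n - 1) S, U - S, U - insert (n - 1) S}"
proof (cases "n \<in> X")
  case True
  define N where "N = U - X"
  have "N - {n - 1, n} = S" "n \<notin> N" using assms True N_def by auto
  then have "N = S \<or> N = insert (n - 1) S" by blast
  moreover have "X = U - N" using N_def assms(1) by blast
  ultimately show ?thesis by blast
next
  case False
  then have "X - {n - 1, n} = S" using assms by simp
  then have "X = S \<or> X = insert (n - 1) S" using False by blast
  then show ?thesis by blast
qed

lemma upper:
  fixes n :: nat
  assumes "3 \<le> n"
  shows "\<exists>c :: nat set \<Rightarrow> nat. (\<forall>A\<in>Pow {1..n}. c A < 2 ^ (n - 2)) \<and>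
      (\<forall>i<2 ^ (n - 2). \<not> berge_copy K3_V K3_E {1..n} {A \<in> Pow {1..n}. c A = i})"
proof -
  define U where "U = {1..n}"
  define W where "W = U - {n - 1, n}"
  have sub: "{n - 1, n} \<subseteq> U" using assms U_def by auto
  have cW: "card W = n - 2" unfolding W_def using card_Diff_subset[OF _ sub] sub assms
    by (simp add: U_def)
  have "finite (Pow W)" unfolding W_def U_def by simp
  moreover have "card (Pow W) = 2 ^ (n - 2)" using cW card_Pow[of W] W_def U_def by simp
  ultimately obtain h where h: "bij_betw h {0..<(2::nat) ^ (n - 2)} (Pow W)"
    using ex_bij_betw_nat_finite[of "Pow W"] by auto
  define T where "T = (\<lambda>A. (if n \<in> A then U - A else A) - {n - 1, n})"
  define c where "c = (\<lambda>A. inv_into {0..<2 ^ (n - 2)} h (T A))"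
  have himg: "h ` {0..<2 ^ (n - 2)} = Pow W" using h by (simp add: bij_betw_def)
  have TW: "A \<in> Pow U \<Longrightarrow> T A \<in> Pow W" for A unfolding T_def W_def by auto
  have c1: "A \<in> Pow U \<Longrightarrow> c A < 2 ^ (n - 2)" for A
  proof -
    assume "A \<in> Pow U"
    then have "T A \<in> Pow W" by (rule TW)
    then have "T A \<in> h ` {0..<2 ^ (n - 2)}" unfolding himg .
    then have "c A \<in> {0..<2 ^ (n - 2)}" unfolding c_def by (rule inv_into_into)
    then show ?thesis by simp
  qed
  have c2: "A \<in> Pow U \<Longrightarrow> h (c A) = T A" for A
  proof -
    assume "A \<in> Pow U"
    then have "T A \<in> Pow W" by (rule TW)
    then have "T A \<in> h ` {0..<2 ^ (n - 2)}" unfolding himg .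
    then show ?thesis unfolding c_def by (rule f_inv_into_f)
  qed
  have nU: "n \<in> U" using sub by blast
  have mem: "A \<in> {A \<in> Pow U. c A = i} \<Longrightarrow>
     A \<in> {h i, insert (n - 1) (h i), U - h i, U - insert (n - 1) (h i)}" for A i
  proof -
    assume a: "A \<in> {A \<in> Pow U. c A = i}"
    then have aU: "A \<in> Pow U" and ci: "c A = i" by simp_all
    have "h (c A) = T A" by (rule c2[OF aU])
    then have "T A = h i" using ci by simp
    then have tt: "(if n \<in> A then U - A else A) - {n - 1, n} = h i" unfolding T_def .
    have "A \<subseteq> U" using aU by simp
    then show ?thesis by (rule member4[OF _ nU tt])
  qed
  have nb: "\<not> berge_copy K3_V K3_E U {A \<in> Pow U. c A = i}" for i
  proof
    assume "berge_copy K3_V K3_E U {A \<in> Pow U. c A = i}"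
    then obtain X Y Z where xyz: "X \<in> {A \<in> Pow U. c A = i}" "Y \<in> {A \<in> Pow U. c A = i}"
      "Z \<in> {A \<in> Pow U. c A = i}" "X \<noteq> Y" "Y \<noteq> Z" "X \<noteq> Z"
      "X \<inter> Y \<noteq> {}" "Y \<inter> Z \<noteq> {}" "X \<inter> Z \<noteq> {}"
      by (rule berge_three)
    have r1: "h i \<inter> (U - h i) = {}" by blast
    have r2: "(U - h i) \<inter> h i = {}" by blast
    have r3: "insert (n - 1) (h i) \<inter> (U - insert (n - 1) (h i)) = {}" by blast
    have r4: "(U - insert (n - 1) (h i)) \<inter> insert (n - 1) (h i) = {}" by blast
    have y1: "Y \<inter> X \<noteq> {}" using xyz(7) by blast
    have y2: "Z \<inter> Y \<noteq> {}" using xyz(8) by blast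
    have y3: "Z \<inter> X \<noteq> {}" using xyz(9) by blast
    show False
      by (rule pigeon4[where R = "\<lambda>P Q. P \<inter> Q = {}", OF r1 r2 r3 r4
            mem[OF xyz(1)] mem[OF xyz(2)] mem[OF xyz(3)] xyz(4-9) y1 y2 y3])
  qed
  have "(\<forall>A\<in>Pow {1..n}. c A < 2 ^ (n - 2)) \<and>
      (\<forall>i<2 ^ (n - 2). \<not> berge_copy K3_V K3_E {1..n} {A \<in> Pow {1..n}. c A = i})"
    using c1 nb unfolding U_def by blast
  then show ?thesis by (rule exI[of _ c])
qed

lemma lower:
  fixes n k :: nat and c :: "nat set \<Rightarrow> nat"
  assumes n: "odd n" "3 \<le> n" "n \<noteq> 5"
    and ck: "\<forall>A\<in>Pow {1..n}. c A < k"
    and nb: "\<forall>i<k. \<not> berge_copy K3_V K3_E {1..n} {A \<in> Pow {1..n}. c A = i}"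
  shows "2 ^ (n - 2) \<le> k"
proof -
  define U where "U = {1..n::nat}"
  have U: "finite U" "card U = n" unfolding U_def by auto
  have nn: "n = 3 \<or> 7 \<le> n" using n by presburger
  obtain m where m: "n = 2 * m + 1" using n(1) oddE by blast
  define L where "L = {A \<in> Pow U. n + 1 \<le> 2 * card A}"
  have fL: "finite L" unfolding L_def using U by simp
  have cls: "card {A \<in> L. c A = i} \<le> 2" if i: "i < k" for i
  proof (rule ccontr)
    assume "\<not> ?thesis"
    then have "3 \<le> card {A \<in> L. c A = i}" by simp
    then obtain X Y Z where xyz: "X \<in> {A \<in> L. c A = i}" "Y \<in> {A \<in> L. c A = i}"
      "Z \<in> {A \<in> L. c A = i}" "X \<noteq> Y" "Y \<noteq> Z" "X \<noteq> Z" by (rule three_elems)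
    have "tri X Y Z" using tri_main[OF U _ _ _ _ _ _ xyz(4-6) nn] xyz(1-3) unfolding L_def by auto
    then have "berge_copy K3_V K3_E U {A \<in> Pow U. c A = i}"
      using tri_berge[of X Y Z] xyz unfolding L_def by auto
    then show False using nb i unfolding U_def by blast
  qed
  have "L \<subseteq> (\<Union>i\<in>{..<k}. {A \<in> L. c A = i})" using ck unfolding L_def U_def by auto
  then have "card L \<le> card (\<Union>i\<in>{..<k}. {A \<in> L. c A = i})"
    using fL by (intro card_mono) auto
  also have "\<dots> \<le> (\<Sum>i\<in>{..<k}. card {A \<in> L. c A = i})" by (rule card_UN_le) simp
  also have "\<dots> \<le> (\<Sum>i\<in>{..<k}. 2)" using cls by (intro sum_mono) auto
  finally have cL: "card L \<le> 2 * k" by simp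
  define comp where "comp = (\<lambda>A. U - A)"
  have inj: "inj_on comp L" unfolding inj_on_def comp_def L_def by auto
  have cardc: "A \<subseteq> U \<Longrightarrow> card (U - A) = n - card A" for A
    using U card_Diff_subset[of A U] finite_subset by auto
  have cardA: "A \<subseteq> U \<Longrightarrow> card A \<le> n" for A using U card_mono[of U A] by simp
  have cover: "Pow U = L \<union> comp ` L"
  proof
    show "Pow U \<subseteq> L \<union> comp ` L"
    proof
      fix A assume A: "A \<in> Pow U"
      show "A \<in> L \<union> comp ` L"
      proof (cases "n + 1 \<le> 2 * card A")
        case True then show ?thesis using A unfolding L_def by auto
      next
        case False
        have "card (U - A) = n - card A" using A cardc by auto
        moreover have "card A \<le> n" using cardA A by auto
        ultimately have "n + 1 \<le> 2 * card (U - A)" using False m by arith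
        then have "U - A \<in> L" unfolding L_def by auto
        moreover have "A = comp (U - A)" using A unfolding comp_def by auto
        ultimately show ?thesis by blast
      qed
    qed
  next
    show "L \<union> comp ` L \<subseteq> Pow U" unfolding L_def comp_def by auto
  qed
  have disj: "L \<inter> comp ` L = {}"
  proof (rule ccontr)
    assume "L \<inter> comp ` L \<noteq> {}"
    then obtain B where B: "B \<in> L" "U - B \<in> L" unfolding comp_def by auto
    have "card (U - B) = n - card B" using B cardc unfolding L_def by auto
    then show False using B cardA[of B] unfolding L_def by auto
  qed
  have "card (Pow U) = card L + card (comp ` L)"
    unfolding cover using disj fL by (intro card_Un_disjoint) auto
  moreover have "card (comp ` L) = card L" using inj card_image by blast
  moreover have "card (Pow U) = 2 ^ n" using U card_Pow[of U] by simp
  ultimately have "2 ^ n \<le> 4 * k" using cL by simp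
  moreover have "(2::nat) ^ n = 4 * 2 ^ (n - 2)"
  proof -
    have "n = (n - 2) + 2" using n by simp
    then have "(2::nat) ^ n = 2 ^ (n - 2) * 2 ^ 2" by (metis power_add)
    then show ?thesis by simp
  qed
  ultimately show ?thesis by simp
qed

theorem theorem1:
  fixes n :: nat
  assumes "odd n" and "n \<ge> 3" and "n \<noteq> 5"
  shows "f_berge n K3_V K3_E = 2 ^ (n - 2)"
  unfolding f_berge_def
proof (rule Least_equality)
  show "\<exists>c :: nat set \<Rightarrow> nat. (\<forall>A\<in>Pow {1..n}. c A < 2 ^ (n - 2)) \<and>
      (\<forall>i<2 ^ (n - 2). \<not> berge_copy K3_V K3_E {1..n} {A \<in> Pow {1..n}. c A = i})"
    using upper assms(2) by blast
next
  fix k assume "\<exists>c :: nat set \<Rightarrow> nat. (\<forall>A\<in>Pow {1..n}. c A < k) \<and>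
      (\<forall>i<k. \<not> berge_copy K3_V K3_E {1..n} {A \<in> Pow {1..n}. c A = i})"
  then show "2 ^ (n - 2) \<le> k" using lower assms by blast
qed

end
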